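(* Let $F$ be a field of characteristic $2$ and let $q=\langle a_1,\dots,a_n\rangle$ be a totally singular quadratic form over $F$ with not all $a_i=0$. Let $L/F$ be a finite field extension, $\lambda\in L^*$ and $K=F(\lambda)$. If $\lambda\in G_L(q_L)$, then $K/F$ is separable or $L/K$ is inseparable.
   Context: $\langle a_1,\dots,a_n\rangle$ denotes $a_1x_1^2+\dots+a_nx_n^2$. $G_L(q_L)=\{c\in L^*: q_L\cong cq_L\}$ is the group of similarity factors of $q_L$. *)

theory Defs
  imports "HOL-Analysis.Analysis" "HOL-Computational_Algebra.Polynomial_Factorial"
begin

text \<open>Subfields of the ambient field 'a (which plays the role of L).\<close>
definition is_subfield :: "'a::field set \<Rightarrow> bool" where
  "is_subfield S \<longleftrightarrow> 0 \<in> S \<and> 1 \<in> S \<and>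
     (\<forall>x\<in>S. \<forall>y\<in>S. x + y \<in> S \<and> x - y \<in> S \<and> x * y \<in> S) \<and>
     (\<forall>x\<in>S. x \<noteq> 0 \<longrightarrow> inverse x \<in> S)"

definition adjoin :: "'a::field set \<Rightarrow> 'a \<Rightarrow> 'a set" where
  "adjoin F l = \<Inter>{S. is_subfield S \<and> F \<subseteq> S \<and> l \<in> S}"

definition finite_ext :: "'a::field set \<Rightarrow> bool" where
  "finite_ext F \<longleftrightarrow> (\<exists>B. finite B \<and>
     (\<forall>x. \<exists>c. (\<forall>b\<in>B. c b \<in> F) \<and> x = (\<Sum>b\<in>B. c b * b)))"

definition poly_over :: "'a::field set \<Rightarrow> 'a poly \<Rightarrow> bool" where
  "poly_over F p \<longleftrightarrow> (\<forall>i. coeff p i \<in> F)"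

definition is_minpoly :: "'a::field set \<Rightarrow> 'a \<Rightarrow> 'a poly \<Rightarrow> bool" where
  "is_minpoly F al p \<longleftrightarrow> poly_over F p \<and> lead_coeff p = 1 \<and> poly p al = 0 \<and>
     (\<forall>q. poly_over F q \<and> q \<noteq> 0 \<and> poly q al = 0 \<longrightarrow> degree p \<le> degree q)"

definition separable_poly :: "'a::field poly \<Rightarrow> bool" where
  "separable_poly p \<longleftrightarrow> coprime p (pderiv p)"

definition separable_elem :: "'a::field set \<Rightarrow> 'a \<Rightarrow> bool" where
  "separable_elem F al \<longleftrightarrow> (\<exists>p. is_minpoly F al p \<and> separable_poly p)"

definition separable_ext :: "'a::field set \<Rightarrow> 'a set \<Rightarrow> bool" where
  "separable_ext F K \<longleftrightarrow> (\<forall>al\<in>K. separable_elem F al)"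

definition diag_qf :: "('a::field, 'n::finite) vec \<Rightarrow> 'a ^ 'n \<Rightarrow> 'a" where
  "diag_qf a x = (\<Sum>i\<in>UNIV. a $ i * (x $ i)^2)"

definition sim_factors :: "'a::field ^ 'n::finite \<Rightarrow> 'a set" where
  "sim_factors a = {c. c \<noteq> 0 \<and> (\<exists>M :: 'a ^ 'n ^ 'n. invertible M \<and>
       (\<forall>x. diag_qf a (M *v x) = c * diag_qf a x))}"

end

theory Submission
  imports Defs
begin


lemma sum_closed:
  assumes "0 \<in> S" "\<And>x y. x\<in>S \<Longrightarrow> y\<in>S \<Longrightarrow> x+y\<in>S" "\<And>i. i\<in>A \<Longrightarrow> f i \<in> S"
  shows "sum f A \<in> S"
proof (cases "finite A")
  case True
  then show ?thesis using assms(3)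
    by (induction A rule: finite_induct) (auto simp: assms(1,2))
qed (simp add: assms(1))

lemma char2_neg: "(2::'a::field) = 0 \<Longrightarrow> - (x::'a) = x"
proof -
  assume h: "(2::'a) = 0"
  have "x + x = 2 * x" by simp
  then have "x + x = 0" using h by simp
  then show ?thesis by (simp add: add_eq_0_iff2 eq_neg_iff_add_eq_0)
qed

lemma char2_of_nat: "(2::'a::field) = 0 \<Longrightarrow> (of_nat n :: 'a) = (if even n then 0 else 1)"
proof -
  assume h: "(2::'a) = 0"
  show ?thesis
  proof (cases "even n")
    case True then obtain k where "n = 2*k" by blast
    then show ?thesis using h True by simp
  next
    case False then obtain k where "n = 2*k+1" using oddE by blast
    then show ?thesis using h False by simp
  qed
qed

lemma char2_sq_sum: "(2::'a::field) = 0 \<Longrightarrow> (\<Sum>i\<in>A. g i)^2 = (\<Sum>i\<in>A. (g i)^2 :: 'a)"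
proof (cases "finite A")
  case True
  assume h: "(2::'a) = 0"
  from True show ?thesis
  proof (induction A rule: finite_induct)
    case (insert x F)
    have "(g x + sum g F)^2 = (g x)^2 + (sum g F)^2 + 2 * g x * sum g F"
      by (simp add: power2_eq_square algebra_simps)
    then show ?case using insert h by simp
  qed simp
qed simp

lemma subF_props:
  fixes F :: "'a::field set"
  assumes "is_subfield F"
  shows "0 \<in> F" "1 \<in> F" "x\<in>F \<Longrightarrow> y\<in>F \<Longrightarrow> x+y \<in> F" "x\<in>F \<Longrightarrow> y\<in>F \<Longrightarrow> x-y \<in> F"
    "x\<in>F \<Longrightarrow> y\<in>F \<Longrightarrow> x*y \<in> F" "x \<in> F \<Longrightarrow> inverse x \<in> F" "x \<in> F \<Longrightarrow> -x \<in> F"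
    "x\<in>F \<Longrightarrow> y\<in>F \<Longrightarrow> x/y \<in> F" "(of_nat n :: 'a) \<in> F"
    "(\<And>i. i \<in> A \<Longrightarrow> f i \<in> F) \<Longrightarrow> sum f A \<in> F"
proof -
  show z: "0 \<in> F" and o: "1 \<in> F" using assms by (auto simp: is_subfield_def)
  show a: "x+y \<in> F" "x-y \<in> F" "x*y \<in> F" if "x\<in>F" "y\<in>F" for x y using assms that by (auto simp: is_subfield_def)
  show i: "inverse x \<in> F" if "x\<in>F" for x using assms that z by (cases "x = 0") (auto simp: is_subfield_def)
  show "-x \<in> F" if "x \<in> F" using a(2)[OF z that] by simp
  show "x/y \<in> F" if "x\<in>F" "y\<in>F" using a(3)[OF that(1) i[OF that(2)]] by (simp add: divide_inverse)
  show "(of_nat n :: 'a) \<in> F" by (induction n) (auto simp: z o a)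
  show "sum f A \<in> F" if "\<And>i. i \<in> A \<Longrightarrow> f i \<in> F" by (rule sum_closed) (use z a that in auto)
qed

inductive_set SF :: "'a::field set \<Rightarrow> 'a set" for F where
  SF0: "0 \<in> SF F"
| SFs: "x \<in> SF F \<Longrightarrow> f \<in> F \<Longrightarrow> x + f * y^2 \<in> SF F"

context
  fixes F :: "'a::field set"
  assumes sf: "is_subfield F"
begin

lemma SF_add: "y \<in> SF F \<Longrightarrow> x \<in> SF F \<Longrightarrow> x + y \<in> SF F"
proof (induction y rule: SF.induct)
  case (SFs y f z)
  then have "(x + y) + f * z^2 \<in> SF F" by (intro SF.SFs) auto
  then show ?case by (simp add: add.assoc)
qed simp

lemma SF_msq: "x \<in> SF F \<Longrightarrow> f \<in> F \<Longrightarrow> x * (f * z^2) \<in> SF F"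
proof (induction x rule: SF.induct)
  case SF0 then show ?case by (simp add: SF.SF0)
next
  case (SFs x g y)
  have "x * (f * z^2) + (g*f) * (y*z)^2 \<in> SF F"
    using SFs subF_props(5)[OF sf] by (intro SF.SFs) auto
  then show ?case by (simp add: algebra_simps power2_eq_square)
qed

lemma SF_mult: "y \<in> SF F \<Longrightarrow> x \<in> SF F \<Longrightarrow> x * y \<in> SF F"
proof (induction y rule: SF.induct)
  case SF0 then show ?case by (simp add: SF.SF0)
next
  case (SFs y f z)
  then show ?case using SF_add SF_msq by (simp add: distrib_left)
qed

lemma SF_sq: "z^2 \<in> SF F"
  using SF.SFs[OF SF.SF0 subF_props(2)[OF sf], of z] by simp

lemma SF_F: "f \<in> F \<Longrightarrow> f \<in> SF F"
proof -
  assume "f \<in> F"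
  then have "0 + f * 1^2 \<in> SF F" by (intro SF.SFs SF.SF0)
  then show ?thesis by simp
qed

lemma SF_inv: "x \<in> SF F \<Longrightarrow> inverse x \<in> SF F"
proof (cases "x = 0")
  case False
  assume "x \<in> SF F"
  have "inverse x = x * (inverse x)^2" using False by (simp add: power2_eq_square)
  then show ?thesis using SF_mult[OF SF_sq \<open>x \<in> SF F\<close>, of "inverse x"] by simp
qed (simp add: SF.SF0)

lemma SF_sum: "(\<And>i. i \<in> A \<Longrightarrow> g i \<in> SF F) \<Longrightarrow> sum g A \<in> SF F"
  by (rule sum_closed) (auto simp: SF.SF0 SF_add)

lemma SF_subfield: "(2::'a) = 0 \<Longrightarrow> is_subfield (SF F)"
  unfolding is_subfield_def
  using SF.SF0 SF_F subF_props(2)[OF sf] SF_add SF_mult SF_inv char2_neg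
  by (metis diff_conv_add_uminus)

lemma SF_mono: "x \<in> SF K \<Longrightarrow> K \<subseteq> SF F \<Longrightarrow> x \<in> SF F"
proof (induction x rule: SF.induct)
  case (SFs x f y)
  then show ?case using SF_add SF_mult SF_sq by auto
qed (simp add: SF.SF0)

end

definition spanF :: "'a::field set \<Rightarrow> ('i \<Rightarrow> 'a) \<Rightarrow> 'i set \<Rightarrow> 'a set" where
  "spanF F w I = {x. \<exists>c. (\<forall>i\<in>I. c i \<in> F) \<and> x = (\<Sum>i\<in>I. c i * w i)}"

definition indepF :: "'a::field set \<Rightarrow> ('i \<Rightarrow> 'a) \<Rightarrow> 'i set \<Rightarrow> bool" where
  "indepF F v J \<longleftrightarrow> (\<forall>c. (\<forall>j\<in>J. c j \<in> F) \<longrightarrow> (\<Sum>j\<in>J. c j * v j) = 0 \<longrightarrow> (\<forall>j\<in>J. c j = 0))"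

lemma steinitz:
  fixes F :: "'a::field set" and w :: "'i \<Rightarrow> 'a" and v :: "'j \<Rightarrow> 'a"
  assumes sf: "is_subfield F" and fI: "finite I"
  shows "finite J \<Longrightarrow> card I < card J \<Longrightarrow> (\<forall>j\<in>J. v j \<in> spanF F w I) \<Longrightarrow> \<not> indepF F v J"
  using fI
proof (induction I arbitrary: J v rule: finite_induct)
  case empty
  then have "J \<noteq> {}" by auto
  then obtain j0 where j0: "j0 \<in> J" by blast
  have "v j0 = 0" using empty j0 by (auto simp: spanF_def)
  let ?c = "\<lambda>j. if j = j0 then 1 else (0::'a)"
  have "(\<Sum>j\<in>J. ?c j * v j) = 0"
    using \<open>v j0 = 0\<close> by (intro sum.neutral ballI) simp
  moreover have "\<forall>j\<in>J. ?c j \<in> F" using subF_props(1,2)[OF sf] by auto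
  ultimately have "?c j0 = 0" if "indepF F v J"
    using j0 spec[OF that[unfolded indepF_def], of ?c] by blast
  then show ?case by auto
next
  case (insert i I J v)
  have "\<forall>j\<in>J. \<exists>c. (\<forall>k\<in>insert i I. c k \<in> F) \<and> v j = (\<Sum>k\<in>insert i I. c k * w k)"
    using insert.prems(3) by (auto simp: spanF_def)
  from bchoice[OF this] obtain C where
    C0: "\<forall>j\<in>J. (\<forall>k\<in>insert i I. C j k \<in> F) \<and> v j = (\<Sum>k\<in>insert i I. C j k * w k)"
    by (elim exE)
  have C: "(\<forall>k\<in>insert i I. C j k \<in> F) \<and> v j = (\<Sum>k\<in>insert i I. C j k * w k)" if "j \<in> J" for j
    using C0 that by (rule bspec)
  have vj: "v j = C j i * w i + (\<Sum>k\<in>I. C j k * w k)" if "j \<in> J" for j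
    using C[OF that] insert(1,2) by simp
  show ?case
  proof (cases "\<forall>j\<in>J. C j i = 0")
    case True
    have "\<forall>j\<in>J. v j \<in> spanF F w I"
    proof
      fix j assume jJ: "j \<in> J"
      have "v j = (\<Sum>k\<in>I. C j k * w k)" using vj[OF jJ] True jJ by simp
      moreover have "\<forall>k\<in>I. C j k \<in> F" using C[OF jJ] by auto
      ultimately show "v j \<in> spanF F w I" unfolding spanF_def
        by (intro CollectI exI[of _ "C j"]) simp
    qed
    moreover have "card I < card J" using insert.prems(2) insert.hyps(1,2) by simp
    ultimately show ?thesis by (intro insert.IH[OF insert.prems(1)])
  next
    case False
    then obtain j0 where j0: "j0 \<in> J" "C j0 i \<noteq> 0" by blast
    define J' where "J' = J - {j0}"
    define t where "t j = C j i / C j0 i" for j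
    define v' where "v' j = v j - t j * v j0" for j
    have tF: "t j \<in> F" if "j \<in> J" for j
      using C[OF that] C[OF j0(1)] subF_props(8)[OF sf] unfolding t_def by auto
    have sp: "v' j \<in> spanF F w I" if "j \<in> J'" for j
    proof -
      have jJ: "j \<in> J" using that J'_def by auto
      have s: "(\<Sum>k\<in>I. (C j k - t j * C j0 k) * w k) = (\<Sum>k\<in>I. C j k * w k) - t j * (\<Sum>k\<in>I. C j0 k * w k)"
        by (simp add: left_diff_distrib sum_subtractf sum_distrib_left mult.assoc)
      have "v' j = (C j i - t j * C j0 i) * w i + (\<Sum>k\<in>I. (C j k - t j * C j0 k) * w k)"
        unfolding v'_def vj[OF jJ] vj[OF j0(1)] s
        by (simp add: left_diff_distrib right_diff_distrib distrib_left)
      also have "C j i - t j * C j0 i = 0" using j0 by (simp add: t_def)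
      finally have "v' j = (\<Sum>k\<in>I. (C j k - t j * C j0 k) * w k)" by simp
      moreover have "\<forall>k\<in>I. C j k - t j * C j0 k \<in> F"
        using C[OF jJ] C[OF j0(1)] tF[OF jJ] subF_props(4,5)[OF sf] by auto
      ultimately show ?thesis unfolding spanF_def
        by (intro CollectI exI[of _ "\<lambda>k. C j k - t j * C j0 k"]) simp
    qed
    have "finite J'" using insert.prems(1) J'_def by simp
    moreover have "card I < card J'" using insert.prems(1,2) insert.hyps(1,2) j0 J'_def by simp
    moreover have "\<forall>j\<in>J'. v' j \<in> spanF F w I" using sp by blast
    ultimately have "\<not> indepF F v' J'" by (rule insert.IH)
    then obtain d where d: "\<forall>j\<in>J'. d j \<in> F" "(\<Sum>j\<in>J'. d j * v' j) = 0" "\<exists>j\<in>J'. d j \<noteq> 0"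
      unfolding indepF_def by blast
    define e where "e j = (if j = j0 then - (\<Sum>j\<in>J'. d j * t j) else d j)" for j
    have "(\<Sum>j\<in>J. e j * v j) = e j0 * v j0 + (\<Sum>j\<in>J'. e j * v j)"
      unfolding J'_def by (rule sum.remove[OF insert.prems(1) j0(1)])
    also have "(\<Sum>j\<in>J'. e j * v j) = (\<Sum>j\<in>J'. d j * v j)"
      by (rule sum.cong) (auto simp: e_def J'_def)
    also have "(\<Sum>j\<in>J'. d j * v j) = (\<Sum>j\<in>J'. d j * v' j) + (\<Sum>j\<in>J'. d j * t j) * v j0"
    proof -
      have "(\<Sum>j\<in>J'. d j * v' j) = (\<Sum>j\<in>J'. d j * v j - (d j * t j) * v j0)"
        by (simp add: v'_def right_diff_distrib mult.assoc)
      also have "\<dots> = (\<Sum>j\<in>J'. d j * v j) - (\<Sum>j\<in>J'. d j * t j) * v j0"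
        by (simp add: sum_subtractf sum_distrib_right)
      finally show ?thesis by simp
    qed
    finally have "(\<Sum>j\<in>J. e j * v j) = 0" using d(2) by (simp add: e_def)
    moreover have "\<forall>j\<in>J. e j \<in> F"
    proof
      fix j assume "j \<in> J"
      show "e j \<in> F"
      proof (cases "j = j0")
        case True
        have "(\<Sum>j\<in>J'. d j * t j) \<in> F"
          using d(1) tF subF_props(5)[OF sf] J'_def by (intro subF_props(10)[OF sf]) auto
        then show ?thesis using True subF_props(7)[OF sf] by (simp add: e_def)
      qed (use d(1) \<open>j \<in> J\<close> J'_def e_def in auto)
    qed
    moreover have "\<exists>j\<in>J. e j \<noteq> 0" using d(3) J'_def e_def by auto
    ultimately show ?thesis unfolding indepF_def by blast
  qed
qed

lemma indep_subset:
  fixes F :: "'a::field set"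
  assumes sf: "is_subfield F" and ind: "indepF F v J" and sub: "J' \<subseteq> J" and fin: "finite J"
  shows "indepF F v J'"
  unfolding indepF_def
proof (intro allI impI ballI)
  fix c j assume cF: "\<forall>j\<in>J'. c j \<in> F" and s: "(\<Sum>j\<in>J'. c j * v j) = 0" and j: "j \<in> J'"
  define c' where "c' j = (if j \<in> J' then c j else 0)" for j
  have "(\<Sum>j\<in>J. c' j * v j) = (\<Sum>j\<in>J'. c j * v j)"
    by (rule sum.mono_neutral_cong_right[OF fin sub]) (auto simp: c'_def)
  moreover have "\<forall>j\<in>J. c' j \<in> F" using cF subF_props(1)[OF sf] by (auto simp: c'_def)
  ultimately have "\<forall>j\<in>J. c' j = 0" using ind s unfolding indepF_def by simp
  then show "c j = 0" using j sub by (auto simp: c'_def split: if_splits)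
qed

lemma extend_basis:
  fixes F :: "'a::field set" and B :: "'a set" and J :: "nat set" and u :: "nat \<Rightarrow> 'a"
  assumes sf: "is_subfield F" and fB: "finite B" and spB: "spanF F id B = UNIV"
  shows "finite J \<Longrightarrow> indepF F u J \<Longrightarrow>
    \<exists>J2 u2. J \<subseteq> J2 \<and> finite J2 \<and> (\<forall>j\<in>J. u2 j = u j) \<and> indepF F u2 J2 \<and> spanF F u2 J2 = UNIV"
proof (induction "card B - card J" arbitrary: J u rule: less_induct)
  case less
  show ?case
  proof (cases "spanF F u J = UNIV")
    case True
    then show ?thesis using less.prems by (intro exI[of _ J] exI[of _ u]) simp
  next
    case False
    then obtain x where x: "x \<notin> spanF F u J" by blast
    obtain k where k: "k \<notin> J" using less.prems(1) by (meson ex_new_if_finite infinite_UNIV_nat)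
    define u' where "u' = u(k := x)"
    have uu: "u' j = u j" if "j \<in> J" for j using that k by (auto simp: u'_def)
    have indep': "indepF F u' (insert k J)"
      unfolding indepF_def
    proof (intro allI impI ballI)
      fix c j assume cF: "\<forall>j\<in>insert k J. c j \<in> F" and s: "(\<Sum>j\<in>insert k J. c j * u' j) = 0"
        and j: "j \<in> insert k J"
      have "(\<Sum>j\<in>insert k J. c j * u' j) = c k * x + (\<Sum>j\<in>J. c j * u' j)"
        using less.prems(1) k by (simp add: u'_def)
      also have "(\<Sum>j\<in>J. c j * u' j) = (\<Sum>j\<in>J. c j * u j)"
        using uu by (intro sum.cong) auto
      finally have s2: "c k * x + (\<Sum>j\<in>J. c j * u j) = 0" using s by simp
      have ck: "c k = 0"
      proof (rule ccontr)
        assume ck0: "c k \<noteq> 0"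
        have "x = - (\<Sum>j\<in>J. c j * u j) / c k" using s2 ck0
          by (simp add: field_simps add_eq_0_iff2)
        also have "\<dots> = (\<Sum>j\<in>J. (- c j / c k) * u j)"
          by (simp add: sum_divide_distrib sum_negf)
        finally have "x = (\<Sum>j\<in>J. (- c j / c k) * u j)" .
        moreover have "\<forall>j\<in>J. - c j / c k \<in> F" using cF subF_props(7,8)[OF sf] by auto
        ultimately have "x \<in> spanF F u J" unfolding spanF_def
          by (intro CollectI exI[of _ "\<lambda>j. - c j / c k"]) simp
        then show False using x by simp
      qed
      then have "(\<Sum>j\<in>J. c j * u j) = 0" using s2 by simp
      then have "\<forall>j\<in>J. c j = 0" using less.prems(2) cF unfolding indepF_def by auto
      then show "c j = 0" using ck j by auto
    qed
    have fin': "finite (insert k J)" using less.prems(1) by simp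
    have "\<not> card B < card (insert k J)"
    proof
      assume "card B < card (insert k J)"
      then have "\<not> indepF F u' (insert k J)"
        using steinitz[OF sf fB fin', where w=id and v=u'] spB by auto
      then show False using indep' by simp
    qed
    then have "card B - card (insert k J) < card B - card J"
      using k less.prems(1) by simp
    from less.hyps[OF this fin' indep'] obtain J2 u2 where
      h: "insert k J \<subseteq> J2" "finite J2" "\<forall>j\<in>insert k J. u2 j = u' j" "indepF F u2 J2" "spanF F u2 J2 = UNIV"
      by blast
    show ?thesis
      using h uu by (intro exI[of _ J2] exI[of _ u2]) auto
  qed
qed

lemma span_squares:
  fixes F :: "'a::field set"
  assumes c2: "(2::'a) = 0" and sf: "is_subfield F" and SFU: "SF F = UNIV"
    and sp: "spanF F u J = UNIV"
  shows "spanF F (\<lambda>j. (u j)^2) J = UNIV"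
proof -
  have "x \<in> spanF F (\<lambda>j. (u j)^2) J" if "x \<in> SF F" for x
    using that
  proof (induction x rule: SF.induct)
    case SF0
    show ?case unfolding spanF_def
      using subF_props(1)[OF sf] by (intro CollectI exI[of _ "\<lambda>j. 0"]) simp
  next
    case (SFs x f y)
    obtain c where c: "\<forall>j\<in>J. c j \<in> F" "x = (\<Sum>j\<in>J. c j * (u j)^2)"
      using SFs.IH unfolding spanF_def by blast
    have "y \<in> spanF F u J" using sp by simp
    then obtain d where d: "\<forall>j\<in>J. d j \<in> F" "y = (\<Sum>j\<in>J. d j * u j)"
      unfolding spanF_def by blast
    have "y^2 = (\<Sum>j\<in>J. (d j)^2 * (u j)^2)"
      unfolding d(2) char2_sq_sum[OF c2] by (simp add: power_mult_distrib)
    then have "x + f * y^2 = (\<Sum>j\<in>J. (c j + f * (d j)^2) * (u j)^2)"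
      using c(2) by (simp add: sum_distrib_left sum.distrib distrib_right mult.assoc)
    moreover have "\<forall>j\<in>J. c j + f * (d j)^2 \<in> F"
      using c(1) d(1) SFs.hyps(2) subF_props(3,5)[OF sf] by (simp add: power2_eq_square)
    ultimately show ?case unfolding spanF_def
      by (intro CollectI exI[of _ "\<lambda>j. c j + f * (d j)^2"]) simp
  qed
  then show ?thesis using SFU by auto
qed

lemma indep_from_span:
  fixes F :: "'a::field set"
  assumes sf: "is_subfield F" and fin: "finite J" and ind: "indepF F u J"
    and sp2: "spanF F u2 J = UNIV"
  shows "indepF F u2 J"
proof (rule ccontr)
  assume "\<not> indepF F u2 J"
  then obtain c j0 where c: "\<forall>j\<in>J. c j \<in> F" "(\<Sum>j\<in>J. c j * u2 j) = 0" "j0 \<in> J" "c j0 \<noteq> 0"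
    unfolding indepF_def by blast
  define J' where "J' = J - {j0}"
  have "(\<Sum>j\<in>J. c j * u2 j) = c j0 * u2 j0 + (\<Sum>j\<in>J'. c j * u2 j)"
    unfolding J'_def by (rule sum.remove[OF fin c(3)])
  then have "c j0 * u2 j0 = - (\<Sum>j\<in>J'. c j * u2 j)" using c(2) by (simp add: eq_neg_iff_add_eq_0)
  then have "u2 j0 = - (\<Sum>j\<in>J'. c j * u2 j) / c j0"
    using c(4) by (metis nonzero_mult_div_cancel_left)
  also have "\<dots> = (\<Sum>j\<in>J'. (- c j / c j0) * u2 j)"
    by (simp add: sum_divide_distrib sum_negf)
  finally have u0: "u2 j0 = (\<Sum>j\<in>J'. (- c j / c j0) * u2 j)" .
  have sp': "\<forall>j\<in>J. u j \<in> spanF F u2 J'"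
  proof
    fix j assume "j \<in> J"
    have "u j \<in> spanF F u2 J" using sp2 by simp
    then obtain e where e: "\<forall>j\<in>J. e j \<in> F" "u j = (\<Sum>j\<in>J. e j * u2 j)"
      unfolding spanF_def by blast
    have "u j = e j0 * u2 j0 + (\<Sum>j\<in>J'. e j * u2 j)"
      unfolding e(2) J'_def by (rule sum.remove[OF fin c(3)])
    also have "\<dots> = (\<Sum>j\<in>J'. (e j + e j0 * (- c j / c j0)) * u2 j)"
    proof -
      have "(\<Sum>j\<in>J'. (e j + e j0 * (- c j / c j0)) * u2 j)
          = (\<Sum>j\<in>J'. e j * u2 j) + (\<Sum>j\<in>J'. e j0 * ((- c j / c j0) * u2 j))"
        by (simp only: distrib_right sum.distrib mult.assoc)
      also have "(\<Sum>j\<in>J'. e j0 * ((- c j / c j0) * u2 j)) = e j0 * u2 j0"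
        unfolding u0 by (simp only: sum_distrib_left)
      finally show ?thesis by (simp add: add.commute)
    qed
    finally have "u j = (\<Sum>j\<in>J'. (e j + e j0 * (- c j / c j0)) * u2 j)" .
    moreover have "\<forall>j\<in>J'. e j + e j0 * (- c j / c j0) \<in> F"
    proof
      fix j assume "j \<in> J'"
      then have jJ: "j \<in> J" using J'_def by auto
      show "e j + e j0 * (- c j / c j0) \<in> F"
        using e(1) c(1,3) jJ
        by (intro subF_props(3)[OF sf] subF_props(5)[OF sf] subF_props(8)[OF sf] subF_props(7)[OF sf]) auto
    qed
    ultimately show "u j \<in> spanF F u2 J'" unfolding spanF_def
      by (intro CollectI exI[of _ "\<lambda>j. e j + e j0 * (- c j / c j0)"]) simp
  qed
  have "finite J'" using fin J'_def by simp
  moreover have "card J' < card J" unfolding J'_def using fin c(3) by (rule card_Diff1_less)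
  ultimately have "\<not> indepF F u J" using steinitz[OF sf \<open>finite J'\<close> fin] sp' by blast
  then show False using ind by simp
qed


lemma poly_sum_N: fixes p :: "'a::field poly" assumes "degree p \<le> N" shows "poly p x = (\<Sum>i\<le>N. coeff p i * x^i)"
  unfolding poly_altdef
  by (rule sum.mono_neutral_left) (use assms in \<open>auto simp: coeff_eq_0\<close>)

lemma coeff_sum_monom': fixes c :: "nat \<Rightarrow> 'a::field" shows "finite A \<Longrightarrow> coeff (\<Sum>i\<in>A. monom (c i) i) k = (if k \<in> A then c k else 0)"
  by (simp add: coeff_sum)

lemma poly_sum_monom': fixes x :: "'a::field" shows "poly (\<Sum>i\<in>A. monom (c i) i) x = (\<Sum>i\<in>A. c i * x^i)"
  unfolding poly_sum by (intro sum.cong refl) (simp add: Polynomial.poly_monom)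

context
  fixes F :: "'a::field set"
  assumes sf: "is_subfield F"
begin

lemma po_mult: "poly_over F p \<Longrightarrow> poly_over F q \<Longrightarrow> poly_over F (p * q)"
  unfolding poly_over_def coeff_mult
  by (auto intro!: subF_props(10)[OF sf] subF_props(5)[OF sf])

lemma po_add: "poly_over F p \<Longrightarrow> poly_over F q \<Longrightarrow> poly_over F (p + q)"
  unfolding poly_over_def using subF_props(3)[OF sf] by simp

lemma po_diff: "poly_over F p \<Longrightarrow> poly_over F q \<Longrightarrow> poly_over F (p - q)"
  unfolding poly_over_def using subF_props(4)[OF sf] by simp

lemma po_smult: "c \<in> F \<Longrightarrow> poly_over F p \<Longrightarrow> poly_over F (smult c p)"
  unfolding poly_over_def using subF_props(5)[OF sf] by simp

lemma po_0: "poly_over F 0" unfolding poly_over_def using subF_props(1)[OF sf] by simp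
lemma po_1: "poly_over F 1" unfolding poly_over_def using subF_props(1,2)[OF sf] by (simp add: coeff_1)

lemma po_pCons: "poly_over F (pCons a p) \<longleftrightarrow> a \<in> F \<and> poly_over F p"
  unfolding poly_over_def
  by (metis coeff_pCons_0 coeff_pCons_Suc not0_implies_Suc)

lemma po_pderiv: "poly_over F p \<Longrightarrow> poly_over F (pderiv p)"
  unfolding poly_over_def coeff_pderiv
  by (intro allI subF_props(5)[OF sf] subF_props(9)[OF sf]) auto

lemma po_divmod: "poly_over F p \<Longrightarrow> poly_over F q \<Longrightarrow> poly_over F (p div q) \<and> poly_over F (p mod q)"
proof (induction p rule: pCons_induct)
  case 0 then show ?case using po_0 by simp
next
  case (pCons a p)
  have a: "a \<in> F" and p: "poly_over F p" using pCons.prems(1) po_pCons by auto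
  with pCons.IH pCons.prems(2) have ih: "poly_over F (p div q)" "poly_over F (p mod q)" by auto
  have lc: "lead_coeff q \<in> F" using pCons.prems(2) unfolding poly_over_def by simp
  have b: "coeff (pCons a (p mod q)) (degree q) / lead_coeff q \<in> F"
    using a ih(2) lc po_pCons[of a "p mod q"] subF_props(8)[OF sf] unfolding poly_over_def by blast
  show ?case
    unfolding div_pCons_eq mod_pCons_eq
    using pCons.prems a ih b
    by (auto simp: po_pCons po_0 intro!: po_diff po_smult)
qed

end

lemma exists_root_poly:
  fixes F :: "'a::field set"
  assumes sf: "is_subfield F" and fe: "finite_ext F"
  shows "\<exists>q. poly_over F q \<and> q \<noteq> 0 \<and> poly q \<beta> = 0"
proof -
  obtain B where B: "finite B" "\<forall>x. \<exists>c. (\<forall>b\<in>B. c b \<in> F) \<and> x = (\<Sum>b\<in>B. c b * b)"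
    using fe unfolding finite_ext_def by blast
  have spB: "spanF F id B = UNIV" using B(2) unfolding spanF_def by auto
  let ?N = "card B"
  have "\<not> indepF F (\<lambda>i. \<beta>^i) {..?N}"
    using steinitz[OF sf B(1), of "{..?N}" "\<lambda>i. \<beta>^i" id] spB by simp
  then obtain c where c: "\<forall>i\<in>{..?N}. c i \<in> F" "(\<Sum>i\<in>{..?N}. c i * \<beta>^i) = 0" "\<exists>i\<in>{..?N}. c i \<noteq> 0"
    unfolding indepF_def by blast
  define q where "q = (\<Sum>i\<in>{..?N}. monom (c i) i)"
  have cq: "coeff q k = (if k \<in> {..?N} then c k else 0)" for k
    unfolding q_def by (rule coeff_sum_monom') simp
  have "poly_over F q" unfolding poly_over_def cq using c(1) subF_props(1)[OF sf] by auto
  moreover have "q \<noteq> 0" using c(3) cq by (metis coeff_0)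
  moreover have "poly q \<beta> = 0" unfolding q_def poly_sum_monom' using c(2) .
  ultimately show ?thesis by blast
qed

lemma exists_minpoly:
  fixes F :: "'a::field set"
  assumes sf: "is_subfield F" and fe: "finite_ext F"
  shows "\<exists>p. is_minpoly F \<beta> p"
proof -
  define P where "P d \<longleftrightarrow> (\<exists>q. poly_over F q \<and> q \<noteq> 0 \<and> poly q \<beta> = 0 \<and> degree q = d)" for d
  have "\<exists>d. P d" using exists_root_poly[OF sf fe, of \<beta>] unfolding P_def by blast
  then obtain d where d: "P d" "\<forall>m<d. \<not> P m" using exists_least_iff[of P] by blast
  then obtain q where q: "poly_over F q" "q \<noteq> 0" "poly q \<beta> = 0" "degree q = d"
    unfolding P_def by blast
  define p where "p = smult (inverse (lead_coeff q)) q"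
  have lc: "lead_coeff q \<noteq> 0" using q(2) by simp
  have "poly_over F p" unfolding p_def
    using q(1) subF_props(6)[OF sf] po_smult[OF sf] unfolding poly_over_def by auto
  moreover have "lead_coeff p = 1" unfolding p_def using lc by simp
  moreover have "poly p \<beta> = 0" unfolding p_def using q(3) by simp
  moreover have "\<forall>r. poly_over F r \<and> r \<noteq> 0 \<and> poly r \<beta> = 0 \<longrightarrow> degree p \<le> degree r"
  proof (intro allI impI)
    fix r assume "poly_over F r \<and> r \<noteq> 0 \<and> poly r \<beta> = 0"
    then have "P (degree r)" unfolding P_def by blast
    then have "\<not> degree r < d" using d(2) by blast
    then show "degree p \<le> degree r" unfolding p_def using lc q(4) by simp
  qed
  ultimately show ?thesis unfolding is_minpoly_def by blast
qed

lemma minpoly_sep: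
  fixes F :: "'a::field set"
  assumes c2: "(2::'a) = 0" and sf: "is_subfield F" and fe: "finite_ext F" and SFU: "SF F = UNIV"
    and mp: "is_minpoly F \<beta> p"
  shows "separable_poly p"
proof -
  have pF: "poly_over F p" and lc: "lead_coeff p = 1" and root: "poly p \<beta> = 0"
    and minp: "\<And>r. poly_over F r \<Longrightarrow> r \<noteq> 0 \<Longrightarrow> poly r \<beta> = 0 \<Longrightarrow> degree p \<le> degree r"
    using mp unfolding is_minpoly_def by auto
  have p0: "p \<noteq> 0" using lc by auto
  define n where "n = degree p"
  have n1: "n \<ge> 1"
  proof (rule ccontr)
    assume "\<not> n \<ge> 1"
    then have "degree p = 0" using n_def by simp
    then have "poly p \<beta> = coeff p 0" by (simp add: poly_altdef)
    also have "\<dots> = 1" using lc \<open>degree p = 0\<close> by simp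
    finally show False using root by simp
  qed
  obtain B where B: "finite B" "\<forall>x. \<exists>c. (\<forall>b\<in>B. c b \<in> F) \<and> x = (\<Sum>b\<in>B. c b * b)"
    using fe unfolding finite_ext_def by blast
  have spB: "spanF F id B = UNIV" using B(2) unfolding spanF_def by auto
  have indpow: "indepF F (\<lambda>i. \<beta>^i) {..<n}"
    unfolding indepF_def
  proof (intro allI impI ballI)
    fix c j assume cF: "\<forall>j\<in>{..<n}. c j \<in> F" and s: "(\<Sum>j\<in>{..<n}. c j * \<beta>^j) = 0" and j: "j \<in> {..<n}"
    define q where "q = (\<Sum>i\<in>{..<n}. monom (c i) i)"
    have cq: "coeff q k = (if k \<in> {..<n} then c k else 0)" for k
      unfolding q_def by (rule coeff_sum_monom') simp
    have qF: "poly_over F q" unfolding poly_over_def cq using cF subF_props(1)[OF sf] by auto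
    have qr: "poly q \<beta> = 0" unfolding q_def poly_sum_monom' using s .
    have "degree q \<le> n - 1" by (rule degree_le) (use n1 in \<open>auto simp: cq\<close>)
    then have "q = 0" using minp[OF qF _ qr] n1 n_def by fastforce
    then show "c j = 0" using cq[of j] j by simp
  qed
  have rnz: "pderiv p \<noteq> 0"
  proof
    assume pd: "pderiv p = 0"
    have odd0: "coeff p i = 0" if "odd i" for i
    proof -
      obtain k where k: "i = Suc k" using \<open>odd i\<close> by (cases i) auto
      have "coeff (pderiv p) k = of_nat (Suc k) * coeff p (Suc k)" by (rule coeff_pderiv)
      moreover have "(of_nat (Suc k) :: 'a) = 1" using char2_of_nat[OF c2, of "Suc k"] that k by simp
      ultimately show ?thesis using pd k by simp
    qed
    have "even n" using odd0[of n] lc n_def by auto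
    then obtain m where m: "n = 2 * m" by blast
    have m1: "m \<ge> 1" "m < n" using m n1 by auto
    obtain J2 u2 where h: "{..<n} \<subseteq> J2" "finite J2" "\<forall>j\<in>{..<n}. u2 j = \<beta>^j"
      "indepF F u2 J2" "spanF F u2 J2 = UNIV"
      using extend_basis[OF sf B(1) spB, of "{..<n}" "\<lambda>i. \<beta>^i"] indpow by auto
    have sq: "indepF F (\<lambda>j. (u2 j)^2) J2"
      using indep_from_span[OF sf h(2) h(4)] span_squares[OF c2 sf SFU h(5)] by blast
    then have sq': "indepF F (\<lambda>j. (u2 j)^2) {..<n}" using indep_subset[OF sf sq h(1) h(2)] by blast
    define d where "d k = (if k \<le> m then coeff p (2*k) else 0)" for k
    have dF: "\<forall>k\<in>{..<n}. d k \<in> F" using pF subF_props(1)[OF sf] unfolding d_def poly_over_def by auto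
    have "(\<Sum>k\<in>{..<n}. d k * (u2 k)^2) = (\<Sum>k\<in>{..<n}. d k * (\<beta>^k)^2)"
      using h(3) by (intro sum.cong) auto
    also have "\<dots> = (\<Sum>k\<in>{..m}. coeff p (2*k) * \<beta>^(2*k))"
      by (rule sum.mono_neutral_cong_right) (use m1 in \<open>auto simp: d_def power_mult[symmetric] mult.commute\<close>)
    also have "\<dots> = (\<Sum>i\<in>(\<lambda>k. 2*k) ` {..m}. coeff p i * \<beta>^i)"
      by (subst sum.reindex) (auto simp: inj_on_def)
    also have "\<dots> = (\<Sum>i\<le>n. coeff p i * \<beta>^i)"
    proof (rule sum.mono_neutral_left)
      show "(\<lambda>k. 2*k) ` {..m} \<subseteq> {..n}" using m by auto
      show "\<forall>i\<in>{..n} - (\<lambda>k. 2*k) ` {..m}. coeff p i * \<beta>^i = 0"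
      proof
        fix i assume i: "i \<in> {..n} - (\<lambda>k. 2*k) ` {..m}"
        have "odd i"
        proof
          assume "even i"
          then obtain k where "i = 2*k" by blast
          then show False using i m by auto
        qed
        then show "coeff p i * \<beta>^i = 0" using odd0 by simp
      qed
    qed simp
    also have "\<dots> = poly p \<beta>" using poly_altdef n_def by metis
    finally have "(\<Sum>k\<in>{..<n}. d k * (u2 k)^2) = 0" using root by simp
    then have "d m = 0" using sq' dF m1 unfolding indepF_def by auto
    moreover have "d m = 1" using lc n_def m by (simp add: d_def)
    ultimately show False by simp
  qed
  define r where "r = pderiv p"
  have rF: "poly_over F r" using po_pderiv[OF sf pF] r_def by simp
  have dr: "degree r < n"
  proof -
    have "degree r \<le> n - 1"
      by (rule degree_le) (use n1 n_def in \<open>auto simp: r_def coeff_pderiv coeff_eq_0\<close>)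
    then show ?thesis using n1 by simp
  qed
  define I where "I = {s. s \<noteq> 0 \<and> (\<exists>u v. poly_over F u \<and> poly_over F v \<and> s = u * p + v * r)}"
  have rI: "r \<in> I"
  proof -
    have "r = 0 * p + 1 * r" by simp
    then show ?thesis unfolding I_def
      by (intro CollectI conjI exI[of _ 0] exI[of _ 1]) (use rnz r_def po_0[OF sf] po_1[OF sf] in auto)
  qed
  define P where "P k \<longleftrightarrow> (\<exists>s\<in>I. degree s = k)" for k
  have "\<exists>k. P k" using rI P_def by blast
  then obtain k where k: "P k" "\<forall>k'<k. \<not> P k'" using exists_least_iff[of P] by blast
  then obtain s where s: "s \<in> I" "degree s = k" unfolding P_def by blast
  have smin: "degree s \<le> degree s'" if "s' \<in> I" for s'
    using k(2) s(2) that unfolding P_def by (metis not_le)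
  obtain u v where uv: "poly_over F u" "poly_over F v" "s = u * p + v * r" "s \<noteq> 0"
    using s(1) unfolding I_def by blast
  have sF: "poly_over F s" using uv po_add[OF sf] po_mult[OF sf] pF rF by simp
  define a where "a = p div s"
  define b where "b = p mod s"
  have aF: "poly_over F a" and bF: "poly_over F b"
    using po_divmod[OF sf pF sF] a_def b_def by auto
  have pab: "p = a * s + b" unfolding a_def b_def by simp
  have b0: "b = 0"
  proof (rule ccontr)
    assume bn: "b \<noteq> 0"
    have "b = (1 - a * u) * p + (0 - a * v) * r"
      using pab uv(3) by (simp add: algebra_simps)
    moreover have "poly_over F (1 - a * u)" "poly_over F (0 - a * v)"
      using po_diff[OF sf] po_mult[OF sf] po_1[OF sf] aF uv(1,2) po_0[OF sf] by blast+
    ultimately have "b \<in> I" unfolding I_def using bn by blast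
    then have "degree s \<le> degree b" by (rule smin)
    moreover have "degree b < degree s" using degree_mod_less'[OF uv(4)] bn b_def by simp
    ultimately show False by simp
  qed
  have ds: "degree s = 0"
  proof (rule ccontr)
    assume dsn: "degree s \<noteq> 0"
    have ps: "p = a * s" using pab b0 by simp
    have a0: "a \<noteq> 0" using ps p0 by auto
    have dsr: "degree s < n" using smin[OF rI] dr by simp
    have "poly a \<beta> * poly s \<beta> = 0" using root ps by simp
    then have "poly a \<beta> = 0 \<or> poly s \<beta> = 0" by simp
    then show False
    proof
      assume "poly a \<beta> = 0"
      then have "n \<le> degree a" using minp[OF aF a0] n_def by simp
      moreover have "degree p = degree a + degree s" using ps degree_mult_eq[OF a0 uv(4)] by simp
      ultimately show False using dsn n_def by simp
    next
      assume "poly s \<beta> = 0"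
      then have "n \<le> degree s" using minp[OF sF uv(4)] n_def by simp
      then show False using dsr by simp
    qed
  qed
  have su: "is_unit s" using is_unit_iff_degree[OF uv(4)] ds by simp
  show ?thesis unfolding separable_poly_def
  proof (rule coprimeI)
    fix c assume "c dvd p" "c dvd pderiv p"
    then have "c dvd s" using uv(3) r_def by simp
    then show "is_unit c" using su dvd_unit_imp_unit by blast
  qed
qed


lemma sep_in_SF:
  fixes F :: "'a::field set"
  assumes c2: "(2::'a) = 0" and sf: "is_subfield F" and Ksub: "K \<subseteq> SF F"
    and sep: "separable_elem K \<alpha>"
  shows "\<alpha> \<in> SF F"
proof -
  obtain p where mp: "is_minpoly K \<alpha> p" and cop: "coprime p (pderiv p)"
    using sep unfolding separable_elem_def separable_poly_def by blast
  have pK: "\<And>i. coeff p i \<in> SF F" using mp Ksub unfolding is_minpoly_def poly_over_def by auto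
  have root: "poly p \<alpha> = 0" using mp unfolding is_minpoly_def by auto
  define D where "D = poly (pderiv p) \<alpha>"
  have D0: "D \<noteq> 0"
  proof
    assume "D = 0"
    then have d1: "[:-\<alpha>, 1:] dvd pderiv p"
      using poly_eq_0_iff_dvd[of "pderiv p" \<alpha>] D_def by simp
    have d2: "[:-\<alpha>, 1:] dvd p"
      using poly_eq_0_iff_dvd[of p \<alpha>] root by simp
    have "is_unit [:-\<alpha>, 1:]" by (rule coprime_common_divisor[OF cop d2 d1])
    then show False using is_unit_iff_degree[of "[:-\<alpha>, 1:]"] by simp
  qed
  define N where "N = degree p"
  have T: "of_nat (Suc j) * c * \<alpha>^j \<in> SF F" if "c \<in> SF F" for c j
  proof (cases "even j")
    case True
    then obtain k where k: "j = 2 * k" by blast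
    have "\<alpha>^j = (\<alpha>^k)^2" using k by (simp add: power_mult[symmetric] mult.commute)
    moreover have "(of_nat (Suc j) :: 'a) = 1" using char2_of_nat[OF c2, of "Suc j"] True by simp
    ultimately have "of_nat (Suc j) * c * \<alpha>^j = c * (\<alpha>^k)^2" by simp
    then show ?thesis by (subst \<open>of_nat (Suc j) * c * \<alpha>^j = c * (\<alpha>^k)^2\<close>) (rule SF_mult[OF sf SF_sq[OF sf] that])
  next
    case False
    then show ?thesis using char2_of_nat[OF c2, of "Suc j"] SF.SF0 by simp
  qed
  have dd: "degree (pderiv p) \<le> N"
    by (rule degree_le) (auto simp: N_def coeff_pderiv coeff_eq_0)
  have Dsum: "D = (\<Sum>i\<le>N. of_nat (Suc i) * coeff p (Suc i) * \<alpha>^i)"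
    unfolding D_def poly_sum_N[OF dd] by (simp add: coeff_pderiv)
  have DSF: "D \<in> SF F" unfolding Dsum by (rule SF_sum[OF sf]) (rule T[OF pK])
  have "\<alpha> * D = (\<Sum>i\<le>N. of_nat (Suc i) * coeff p (Suc i) * \<alpha>^(Suc i))"
    unfolding Dsum sum_distrib_left by (intro sum.cong refl) (simp only: power_Suc mult.commute mult.left_commute)
  also have "\<dots> = (\<Sum>j\<le>Suc N. of_nat j * coeff p j * \<alpha>^j)"
    by (subst sum.atMost_Suc_shift) (simp del: of_nat_Suc)
  also have "\<dots> = (\<Sum>j\<le>N. of_nat j * coeff p j * \<alpha>^j)"
    by (subst sum.atMost_Suc) (simp add: N_def coeff_eq_0 del: of_nat_Suc)
  finally have aD: "\<alpha> * D = (\<Sum>j\<le>N. of_nat j * coeff p j * \<alpha>^j)" .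
  have pN: "poly p \<alpha> = (\<Sum>j\<le>N. coeff p j * \<alpha>^j)" by (rule poly_sum_N) (simp add: N_def)
  have "poly p \<alpha> + \<alpha> * D = (\<Sum>j\<le>N. of_nat (Suc j) * coeff p j * \<alpha>^j)"
    unfolding aD pN sum.distrib[symmetric] by (intro sum.cong refl) (simp add: algebra_simps)
  also have "\<dots> \<in> SF F" by (rule SF_sum[OF sf]) (rule T[OF pK])
  finally have "\<alpha> * D \<in> SF F" using root by simp
  then have "\<alpha> * D * inverse D \<in> SF F" using SF_mult[OF sf SF_inv[OF sf DSF]] by blast
  then show ?thesis using D0 by (simp add: mult.assoc)
qed

lemma lam_in_SF:
  fixes F :: "'a::field set" and a :: "'a ^ 'n::finite" and lam :: 'a
  assumes sf: "is_subfield F" and coeffs: "\<forall>i. a $ i \<in> F"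
    and nonzero: "\<exists>i. a $ i \<noteq> 0" and G: "lam \<in> sim_factors a"
  shows "lam \<in> SF F"
proof -
  obtain M :: "'a ^ 'n ^ 'n" where M: "\<forall>x. diag_qf a (M *v x) = lam * diag_qf a x"
    using G unfolding sim_factors_def by blast
  obtain j where j: "a $ j \<noteq> 0" using nonzero by blast
  have "diag_qf a (axis j 1) = (\<Sum>i\<in>UNIV. if i = j then a $ i else 0)"
    unfolding diag_qf_def by (intro sum.cong) (auto simp: axis_def)
  also have "\<dots> = a $ j" by simp
  finally have "lam * a $ j = diag_qf a (M *v axis j 1)" using M by simp
  also have "\<dots> \<in> SF F" unfolding diag_qf_def
  proof (rule SF_sum[OF sf])
    fix i
    show "a $ i * ((M *v axis j 1) $ i)^2 \<in> SF F"
      using SF_mult[OF sf SF_sq[OF sf] SF_F[OF sf coeffs[rule_format, of i]]] by simp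
  qed
  finally have "lam * a $ j * inverse (a $ j) \<in> SF F"
    by (rule SF_mult[OF sf SF_F[OF sf subF_props(6)[OF sf coeffs[rule_format, of j]]]])
  then show ?thesis using j by (simp add: mult.assoc)
qed

theorem lemma7p1:
  fixes F :: "'a::field set" and a :: "'a ^ 'n::finite" and lam :: 'a
  assumes char2: "(2::'a) = 0"
    and subF: "is_subfield F"
    and fin: "finite_ext F"
    and coeffs: "\<forall>i. a $ i \<in> F"
    and nonzero: "\<exists>i. a $ i \<noteq> 0"
    and hlam: "lam \<noteq> 0"
    and G: "lam \<in> sim_factors a"
  shows "separable_ext F (adjoin F lam) \<or> \<not> separable_ext (adjoin F lam) UNIV"
proof (cases "separable_ext (adjoin F lam) UNIV")
  case True
  have lamSF: "lam \<in> SF F" using lam_in_SF[OF subF coeffs nonzero G] .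
  have Ksub: "adjoin F lam \<subseteq> SF F"
    unfolding adjoin_def using SF_subfield[OF subF char2] SF_F[OF subF] lamSF
    by (intro Inter_lower) auto
  have SFU: "SF F = UNIV"
    using sep_in_SF[OF char2 subF Ksub] True unfolding separable_ext_def by blast
  have "separable_ext F (adjoin F lam)"
    unfolding separable_ext_def separable_elem_def
  proof
    fix al
    obtain p where "is_minpoly F al p" using exists_minpoly[OF subF fin] by blast
    then show "\<exists>p. is_minpoly F al p \<and> separable_poly p"
      using minpoly_sep[OF char2 subF fin SFU] by blast
  qed
  then show ?thesis by simp
qed simp


end
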